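(* Assume the setting of the context. Suppose $\gamma\in\mathcal{P}(S^K)$ is such that $\mathcal{M}(\gamma)=\{\nu\in\mathcal{P}(S^K):\gamma=M\nu\}$ is non-empty. Then $\inf\{J(\nu):\nu\in\mathcal{M}(\gamma)\}$ is attained at the symmetric measure \[ \nu_{sym}(\mathbf{x})=\frac{\gamma(\mathbf{x})}{K!\,\rho(\mathbf{x})},\qquad \mathbf{x}\in S^K. \]
   Context: **State space and dynamics.** $S$ is a finite set and $K\ge2$ an integer. For $k=1,\dots,K$, $\Gamma^k$ is an irreducible intensity matrix on $S$. It is reversible with respect to its unique invariant distribution $\mu_k$ (so $\mu_k>0$). Set $\mu=\mu_1\times\cdots\times\mu_K$. **Permutations and weights.** $\Sigma_K$ is the set of permutations of $\{1,\dots,K\}$, and $\mathbf{x}^\sigma=(x_{\sigma^{-1}(1)},\dots,x_{\sigma^{-1}(K)})$. Define $\rho(\mathbf{x})=\mu(\mathbf{x})/\sum_{\sigma'}\mu(\mathbf{x}^{\sigma'})$. **Infinite swapping rates.** - $\Gamma^\infty$ is the rate matrix on $S^K$ with $\Gamma^\infty_{\mathbf{x},\mathbf{y}}=\sum_\sigma\rho(\mathbf{x}^\sigma)\Gamma^{\sigma(i)}_{x_i,y_i}$ when $\mathbf{y}$ differs from $\mathbf{x}$ exactly in coordinate $i$. - Off-diagonal rates between states differing in two or more coordinates are $0$. - $q^\infty(\mathbf{x})=\sum_{\mathbf{y}\ne\mathbf{x}}\Gamma^\infty_{\mathbf{x},\mathbf{y}}$. - $\bar\mu(\mathbf{x})=\frac1{K!}\sum_\sigma\mu(\mathbf{x}^\sigma)$.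 **Map and functional.** - $(M\nu)(\mathbf{x})=\rho(\mathbf{x})\sum_{\sigma}\nu(\mathbf{x}^\sigma)$ for $\nu\in\mathcal{P}(S^K)$. - For $\nu\in\mathcal{P}(S^K)$ with $\theta=\nu/\bar\mu$, \[ J(\nu)=\sum_{\mathbf{x}}q^\infty(\mathbf{x})\theta(\mathbf{x})\bar\mu(\mathbf{x})-\sum_{\mathbf{x}\ne\mathbf{y}}\theta^{1/2}(\mathbf{x})\theta^{1/2}(\mathbf{y})\Gamma^\infty_{\mathbf{x},\mathbf{y}}\bar\mu(\mathbf{x}). \] *)

theory Defs
  imports Complex_Main "HOL-Combinatorics.Permutations"
begin

text \<open>State space S is a finite type 'a; the index set {1..K} is a finite type 'k
  with K = CARD('k). Configurations in S^K are functions 'k => 'a.\<close>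

definition intensity_matrix :: "('a::finite \<Rightarrow> 'a \<Rightarrow> real) \<Rightarrow> bool" where
  "intensity_matrix G \<longleftrightarrow> (\<forall>x y. x \<noteq> y \<longrightarrow> G x y \<ge> 0) \<and> (\<forall>x. (\<Sum>y\<in>UNIV. G x y) = 0)"

definition irreducible_im :: "('a::finite \<Rightarrow> 'a \<Rightarrow> real) \<Rightarrow> bool" where
  "irreducible_im G \<longleftrightarrow> (\<forall>x y. (x, y) \<in> {(a, b). a \<noteq> b \<and> G a b > 0}\<^sup>*)"

definition is_prob :: "('b::finite \<Rightarrow> real) \<Rightarrow> bool" where
  "is_prob p \<longleftrightarrow> (\<forall>x. p x \<ge> 0) \<and> (\<Sum>x\<in>UNIV. p x) = 1"

definition invariant_dist :: "('a::finite \<Rightarrow> 'a \<Rightarrow> real) \<Rightarrow> ('a \<Rightarrow> real) \<Rightarrow> bool" where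
  "invariant_dist G m \<longleftrightarrow> is_prob m \<and> (\<forall>y. (\<Sum>x\<in>UNIV. m x * G x y) = 0)"

definition reversible :: "('a::finite \<Rightarrow> 'a \<Rightarrow> real) \<Rightarrow> ('a \<Rightarrow> real) \<Rightarrow> bool" where
  "reversible G m \<longleftrightarrow> (\<forall>x y. m x * G x y = m y * G y x)"

definition perms :: "('k::finite \<Rightarrow> 'k) set" where
  "perms = {\<sigma>. \<sigma> permutes (UNIV :: 'k set)}"

definition perm_act :: "('k::finite \<Rightarrow> 'a) \<Rightarrow> ('k \<Rightarrow> 'k) \<Rightarrow> ('k \<Rightarrow> 'a)" where
  "perm_act x \<sigma> = x \<circ> inv \<sigma>"

definition mu_prod :: "('k::finite \<Rightarrow> 'a::finite \<Rightarrow> real) \<Rightarrow> ('k \<Rightarrow> 'a) \<Rightarrow> real" where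
  "mu_prod mu x = (\<Prod>k\<in>UNIV. mu k (x k))"

definition rho :: "('k::finite \<Rightarrow> 'a::finite \<Rightarrow> real) \<Rightarrow> ('k \<Rightarrow> 'a) \<Rightarrow> real" where
  "rho mu x = mu_prod mu x / (\<Sum>\<sigma>\<in>perms. mu_prod mu (perm_act x \<sigma>))"

definition Gamma_inf ::
  "('k::finite \<Rightarrow> 'a::finite \<Rightarrow> real) \<Rightarrow> ('k \<Rightarrow> 'a \<Rightarrow> 'a \<Rightarrow> real) \<Rightarrow> ('k \<Rightarrow> 'a) \<Rightarrow> ('k \<Rightarrow> 'a) \<Rightarrow> real" where
  "Gamma_inf mu G x y =
     (if \<exists>!i. x i \<noteq> y i then
        (let i = (THE i. x i \<noteq> y i) in
          \<Sum>\<sigma>\<in>perms. rho mu (perm_act x \<sigma>) * G (\<sigma> i) (x i) (y i))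
      else 0)"

definition q_inf ::
  "('k::finite \<Rightarrow> 'a::finite \<Rightarrow> real) \<Rightarrow> ('k \<Rightarrow> 'a \<Rightarrow> 'a \<Rightarrow> real) \<Rightarrow> ('k \<Rightarrow> 'a) \<Rightarrow> real" where
  "q_inf mu G x = (\<Sum>y\<in>UNIV - {x}. Gamma_inf mu G x y)"

definition mu_bar :: "('k::finite \<Rightarrow> 'a::finite \<Rightarrow> real) \<Rightarrow> ('k \<Rightarrow> 'a) \<Rightarrow> real" where
  "mu_bar mu x = (1 / real (fact (card (UNIV :: 'k set)))) * (\<Sum>\<sigma>\<in>perms. mu_prod mu (perm_act x \<sigma>))"

definition Mmap :: "('k::finite \<Rightarrow> 'a::finite \<Rightarrow> real) \<Rightarrow> (('k \<Rightarrow> 'a) \<Rightarrow> real) \<Rightarrow> ('k \<Rightarrow> 'a) \<Rightarrow> real" where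
  "Mmap mu \<nu> x = rho mu x * (\<Sum>\<sigma>\<in>perms. \<nu> (perm_act x \<sigma>))"

definition Jfun ::
  "('k::finite \<Rightarrow> 'a::finite \<Rightarrow> real) \<Rightarrow> ('k \<Rightarrow> 'a \<Rightarrow> 'a \<Rightarrow> real) \<Rightarrow> (('k \<Rightarrow> 'a) \<Rightarrow> real) \<Rightarrow> real" where
  "Jfun mu G \<nu> =
     (let \<theta> = (\<lambda>x. \<nu> x / mu_bar mu x) in
       (\<Sum>x\<in>UNIV. q_inf mu G x * \<theta> x * mu_bar mu x)
       - (\<Sum>x\<in>UNIV. \<Sum>y\<in>UNIV - {x}. sqrt (\<theta> x) * sqrt (\<theta> y) * Gamma_inf mu G x y * mu_bar mu x))"

definition Mset :: "('k::finite \<Rightarrow> 'a::finite \<Rightarrow> real) \<Rightarrow> (('k \<Rightarrow> 'a) \<Rightarrow> real) \<Rightarrow> (('k \<Rightarrow> 'a) \<Rightarrow> real) set" where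
  "Mset mu \<gamma> = {\<nu>. is_prob \<nu> \<and> \<gamma> = Mmap mu \<nu>}"

definition nu_sym :: "('k::finite \<Rightarrow> 'a::finite \<Rightarrow> real) \<Rightarrow> (('k \<Rightarrow> 'a) \<Rightarrow> real) \<Rightarrow> ('k \<Rightarrow> 'a) \<Rightarrow> real" where
  "nu_sym mu \<gamma> x = \<gamma> x / (real (fact (card (UNIV :: 'k set))) * rho mu x)"

end

theory Submission
  imports Defs "HOL-Analysis.Analysis"
begin

lemma perms_fin: "finite (perms :: ('k::finite \<Rightarrow> 'k) set)"
  unfolding perms_def by (simp add: finite_permutations)

lemma perms_card: "card (perms :: ('k::finite \<Rightarrow> 'k) set) = fact (card (UNIV::'k set))"
  unfolding perms_def by (simp add: card_permutations)

lemma perm_act_comp: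
  assumes "\<sigma> \<in> perms" "\<tau> \<in> perms"
  shows "perm_act (perm_act x \<sigma>) \<tau> = perm_act x (\<tau> \<circ> \<sigma>)"
  using assms unfolding perm_act_def perms_def
  by (simp add: o_inv_distrib permutes_bij comp_assoc)

lemma sum_perm_act:
  fixes f :: "('k::finite \<Rightarrow> 'a::finite) \<Rightarrow> 'b::comm_monoid_add"
  assumes "\<sigma> \<in> perms"
  shows "(\<Sum>x\<in>UNIV. f (perm_act x \<sigma>)) = (\<Sum>x\<in>UNIV. f x)"
proof (rule sum.reindex_bij_witness[where i="\<lambda>y. y \<circ> \<sigma>" and j="\<lambda>x. perm_act x \<sigma>"])
  have p: "\<sigma> permutes UNIV" using assms by (simp add: perms_def)
  show "\<And>a. a \<in> UNIV \<Longrightarrow> perm_act a \<sigma> \<circ> \<sigma> = a"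
    using p unfolding perm_act_def by (simp add: comp_assoc permutes_inv_o)
  show "\<And>a. a \<in> UNIV \<Longrightarrow> perm_act (a \<circ> \<sigma>) \<sigma> = a"
    using p unfolding perm_act_def by (simp add: comp_assoc permutes_inv_o)
qed auto

lemma sum_perms_shift:
  assumes "\<tau> \<in> perms"
  shows "(\<Sum>\<sigma>\<in>perms. f (\<sigma> \<circ> \<tau>)) = (\<Sum>\<sigma>\<in>perms. f \<sigma>)"
  using assms sum_permutations_compose_right[of \<tau> UNIV f] unfolding perms_def by simp

lemma id_perms: "id \<in> perms" unfolding perms_def by (simp add: permutes_id)

lemma Z_sym:
  assumes "\<tau> \<in> perms"
  shows "(\<Sum>\<sigma>\<in>perms. f (perm_act (perm_act x \<tau>) \<sigma>)) = (\<Sum>\<sigma>\<in>perms. f (perm_act x \<sigma>))"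
proof -
  have "(\<Sum>\<sigma>\<in>perms. f (perm_act (perm_act x \<tau>) \<sigma>)) = (\<Sum>\<sigma>\<in>perms. f (perm_act x (\<sigma> \<circ> \<tau>)))"
    using assms by (intro sum.cong) (auto simp: perm_act_comp)
  also have "\<dots> = (\<Sum>\<sigma>\<in>perms. f (perm_act x \<sigma>))"
    using sum_perms_shift[OF assms, of "\<lambda>\<sigma>. f (perm_act x \<sigma>)"] by simp
  finally show ?thesis .
qed

lemma sqrt_avg:
  fixes u v :: "'b \<Rightarrow> real"
  assumes "finite P" "n > 0" "\<And>s. u s \<ge> 0" "\<And>s. v s \<ge> 0" "a > 0" "b > 0"
  shows "(\<Sum>s\<in>P. sqrt (u s / a) * sqrt (v s / b) * a) / n
     \<le> sqrt (((\<Sum>s\<in>P. u s) / n) / a) * sqrt (((\<Sum>s\<in>P. v s) / n) / b) * a"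
proof -
  have cs: "(\<Sum>s\<in>P. sqrt (u s) * sqrt (v s))\<^sup>2 \<le> (\<Sum>s\<in>P. u s) * (\<Sum>s\<in>P. v s)"
    using Cauchy_Schwarz_ineq_sum[of "\<lambda>s. sqrt (u s)" "\<lambda>s. sqrt (v s)" P] assms by simp
  have key: "(\<Sum>s\<in>P. sqrt (u s) * sqrt (v s)) \<le> sqrt (\<Sum>s\<in>P. u s) * sqrt (\<Sum>s\<in>P. v s)"
    by (metis cs real_le_rsqrt real_sqrt_mult)
  have e1: "(\<Sum>s\<in>P. sqrt (u s / a) * sqrt (v s / b) * a) = (\<Sum>s\<in>P. sqrt (u s) * sqrt (v s)) * (a / (sqrt a * sqrt b))"
    by (simp add: sum_distrib_right sum_divide_distrib real_sqrt_divide)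
  have e2: "sqrt (((\<Sum>s\<in>P. u s) / n) / a) * sqrt (((\<Sum>s\<in>P. v s) / n) / b) * a
      = sqrt (\<Sum>s\<in>P. u s) * sqrt (\<Sum>s\<in>P. v s) / n * (a / (sqrt a * sqrt b))"
    using assms by (simp add: real_sqrt_divide real_sqrt_mult)
  have pos: "a / (sqrt a * sqrt b) \<ge> 0" using assms by simp
  have "(\<Sum>s\<in>P. sqrt (u s) * sqrt (v s)) * (a / (sqrt a * sqrt b)) / n
     \<le> sqrt (\<Sum>s\<in>P. u s) * sqrt (\<Sum>s\<in>P. v s) * (a / (sqrt a * sqrt b)) / n"
    using divide_right_mono[OF mult_right_mono[OF key pos], of n] assms(2) by simp
  then show ?thesis unfolding e1 e2 by (simp add: ac_simps)
qed


lemma mu_prod_pos: "(\<And>k s. mu k s > 0) \<Longrightarrow> mu_prod mu x > 0"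
  unfolding mu_prod_def by (simp add: prod_pos)

lemma Z_pos: "(\<And>k s. mu k s > 0) \<Longrightarrow> (\<Sum>\<sigma>\<in>perms. mu_prod mu (perm_act x \<sigma>)) > 0"
  by (rule sum_pos2[OF perms_fin id_perms]) (auto simp: mu_prod_pos less_imp_le)

lemma rho_pos: "(\<And>k s. mu k s > 0) \<Longrightarrow> rho mu x > 0"
  unfolding rho_def by (simp add: mu_prod_pos Z_pos)

lemma mu_bar_pos: "(\<And>k s. mu k s > 0) \<Longrightarrow> mu_bar mu x > 0"
  unfolding mu_bar_def by (simp add: Z_pos)

lemma mu_bar_sym: "\<tau> \<in> perms \<Longrightarrow> mu_bar mu (perm_act x \<tau>) = mu_bar mu x"
  unfolding mu_bar_def by (simp add: Z_sym)

lemma Gamma_diag: "Gamma_inf mu G x x = 0"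
  unfolding Gamma_inf_def by auto

lemma Gamma_nonneg:
  assumes "\<And>k s. mu k s > 0" "\<And>k a b. a \<noteq> b \<Longrightarrow> G k a b \<ge> 0"
  shows "Gamma_inf mu G x y \<ge> 0"
proof (cases "\<exists>!i. x i \<noteq> y i")
  case True
  define i where "i = (THE i. x i \<noteq> y i)"
  have "x i \<noteq> y i" unfolding i_def using theI'[OF True] .
  then have "(\<Sum>\<sigma>\<in>perms. rho mu (perm_act x \<sigma>) * G (\<sigma> i) (x i) (y i)) \<ge> 0"
    using assms by (intro sum_nonneg mult_nonneg_nonneg) (auto simp: rho_pos less_imp_le)
  then show ?thesis unfolding Gamma_inf_def using True by (simp add: Let_def i_def)
qed (simp add: Gamma_inf_def)

lemma Gamma_sym:
  assumes t: "\<tau> \<in> perms"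
  shows "Gamma_inf mu G (perm_act x \<tau>) (perm_act y \<tau>) = Gamma_inf mu G x y"
proof -
  have p: "\<tau> permutes UNIV" using t by (simp add: perms_def)
  have inv1: "\<And>i. \<tau> (inv \<tau> i) = i" and inv2: "\<And>j. inv \<tau> (\<tau> j) = j"
    using permutes_inverses[OF p] by auto
  have pa: "\<And>z i. perm_act z \<tau> i = z (inv \<tau> i)" by (simp add: perm_act_def)
  show ?thesis
  proof (cases "\<exists>!j. x j \<noteq> y j")
    case True
    then obtain j0 where j0: "x j0 \<noteq> y j0" and u: "\<And>j. x j \<noteq> y j \<Longrightarrow> j = j0" by blast
    have ex': "\<exists>!i. perm_act x \<tau> i \<noteq> perm_act y \<tau> i"
      unfolding pa by (metis inv1 inv2 j0 u)
    have th': "(THE i. perm_act x \<tau> i \<noteq> perm_act y \<tau> i) = \<tau> j0"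
      unfolding pa by (rule the_equality) (auto simp: inv2 j0, metis inv1 u)
    have th: "(THE j. x j \<noteq> y j) = j0" using j0 u by blast
    have "Gamma_inf mu G (perm_act x \<tau>) (perm_act y \<tau>)
        = (\<Sum>\<sigma>\<in>perms. rho mu (perm_act (perm_act x \<tau>) \<sigma>) * G (\<sigma> (\<tau> j0)) (x j0) (y j0))"
      unfolding Gamma_inf_def using ex' by (simp add: Let_def th'[unfolded pa] pa inv2)
    also have "\<dots> = (\<Sum>\<sigma>\<in>perms. (\<lambda>\<sigma>. rho mu (perm_act x \<sigma>) * G (\<sigma> j0) (x j0) (y j0)) (\<sigma> \<circ> \<tau>))"
      using t by (intro sum.cong) (auto simp: perm_act_comp)
    also have "\<dots> = (\<Sum>\<sigma>\<in>perms. rho mu (perm_act x \<sigma>) * G (\<sigma> j0) (x j0) (y j0))"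
      by (rule sum_perms_shift[OF t])
    also have "\<dots> = Gamma_inf mu G x y"
      unfolding Gamma_inf_def using True by (simp add: Let_def th)
    finally show ?thesis .
  next
    case False
    have "\<not> (\<exists>!i. perm_act x \<tau> i \<noteq> perm_act y \<tau> i)"
      unfolding pa using False by (metis inv1 inv2)
    then show ?thesis using False unfolding Gamma_inf_def by simp
  qed
qed


definition Tf :: "('k::finite \<Rightarrow> 'a::finite \<Rightarrow> real) \<Rightarrow> ('k \<Rightarrow> 'a \<Rightarrow> 'a \<Rightarrow> real) \<Rightarrow> (('k \<Rightarrow> 'a) \<Rightarrow> real) \<Rightarrow> ('k \<Rightarrow> 'a) \<Rightarrow> ('k \<Rightarrow> 'a) \<Rightarrow> real" where
  "Tf mu G \<nu> x y = Gamma_inf mu G x y * (\<nu> x - sqrt (\<nu> x / mu_bar mu x) * sqrt (\<nu> y / mu_bar mu y) * mu_bar mu x)"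

lemma sum_drop_diag:
  fixes f :: "'b::finite \<Rightarrow> real"
  assumes "f x = 0"
  shows "(\<Sum>y\<in>UNIV - {x}. f y) = (\<Sum>y\<in>UNIV. f y)"
  using sum.remove[of "UNIV::'b set" x f] assms by simp

lemma J_eq:
  assumes "\<And>k s. mu k s > 0"
  shows "Jfun mu G \<nu> = (\<Sum>x\<in>UNIV. \<Sum>y\<in>UNIV. Tf mu G \<nu> x y)"
proof -
  have "\<And>x. q_inf mu G x * (\<nu> x / mu_bar mu x) * mu_bar mu x
      - (\<Sum>y\<in>UNIV - {x}. sqrt (\<nu> x / mu_bar mu x) * sqrt (\<nu> y / mu_bar mu y) * Gamma_inf mu G x y * mu_bar mu x)
      = (\<Sum>y\<in>UNIV. Tf mu G \<nu> x y)"
  proof -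
    fix x
    have mb: "mu_bar mu x > 0" using mu_bar_pos[OF assms] .
    have "(\<Sum>y\<in>UNIV. Tf mu G \<nu> x y) = (\<Sum>y\<in>UNIV - {x}. Tf mu G \<nu> x y)"
      by (rule sum_drop_diag[symmetric]) (simp add: Tf_def Gamma_diag)
    also have "\<dots> = (\<Sum>y\<in>UNIV - {x}. Gamma_inf mu G x y * \<nu> x)
       - (\<Sum>y\<in>UNIV - {x}. sqrt (\<nu> x / mu_bar mu x) * sqrt (\<nu> y / mu_bar mu y) * Gamma_inf mu G x y * mu_bar mu x)"
      unfolding Tf_def by (simp add: sum_subtractf[symmetric] right_diff_distrib ac_simps)
    also have "(\<Sum>y\<in>UNIV - {x}. Gamma_inf mu G x y * \<nu> x) = q_inf mu G x * (\<nu> x / mu_bar mu x) * mu_bar mu x"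
    proof -
      have "q_inf mu G x * (\<nu> x / mu_bar mu x) * mu_bar mu x = q_inf mu G x * \<nu> x" using mb by simp
      then show ?thesis unfolding q_inf_def by (simp add: sum_distrib_right)
    qed
    finally show "?thesis x" by simp
  qed
  then show ?thesis unfolding Jfun_def Let_def by (simp add: sum_subtractf[symmetric])
qed

lemma Tf_perm:
  assumes "\<sigma> \<in> perms"
  shows "Tf mu G (\<lambda>z. \<nu> (perm_act z \<sigma>)) x y = Tf mu G \<nu> (perm_act x \<sigma>) (perm_act y \<sigma>)"
  unfolding Tf_def using assms by (simp add: Gamma_sym mu_bar_sym)

lemma double_sum_perm:
  fixes g :: "('k::finite \<Rightarrow> 'a::finite) \<Rightarrow> ('k \<Rightarrow> 'a) \<Rightarrow> real"
  assumes "\<sigma> \<in> perms"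
  shows "(\<Sum>x\<in>UNIV. \<Sum>y\<in>UNIV. g (perm_act x \<sigma>) (perm_act y \<sigma>)) = (\<Sum>x\<in>UNIV. \<Sum>y\<in>UNIV. g x y)"
proof -
  have "(\<Sum>x\<in>UNIV. \<Sum>y\<in>UNIV. g (perm_act x \<sigma>) (perm_act y \<sigma>)) = (\<Sum>x\<in>UNIV. \<Sum>y\<in>UNIV. g (perm_act x \<sigma>) y)"
    by (rule sum.cong[OF refl], rule sum_perm_act[OF assms])
  also have "\<dots> = (\<Sum>x\<in>UNIV. \<Sum>y\<in>UNIV. g x y)"
    by (rule sum_perm_act[OF assms, of "\<lambda>x. \<Sum>y\<in>UNIV. g x y"])
  finally show ?thesis .
qed

lemma avg_J:
  fixes \<nu> :: "('k::finite \<Rightarrow> 'a::finite) \<Rightarrow> real"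
  assumes mp: "\<And>k s. mu k s > 0" and gn: "\<And>k a b. a \<noteq> b \<Longrightarrow> G k a b \<ge> 0"
    and nn: "\<And>x. \<nu> x \<ge> 0"
  shows "Jfun mu G (\<lambda>x. (\<Sum>\<sigma>\<in>perms. \<nu> (perm_act x \<sigma>)) / real (card (perms::('k\<Rightarrow>'k) set))) \<le> Jfun mu G \<nu>"
proof -
  let ?P = "perms::('k\<Rightarrow>'k) set"
  define n where "n = real (card ?P)"
  have npos: "n > 0" unfolding n_def using perms_fin id_perms card_gt_0_iff by fastforce
  define avg where "avg = (\<lambda>x. (\<Sum>\<sigma>\<in>?P. \<nu> (perm_act x \<sigma>)) / n)"
  have pw: "Tf mu G avg x y \<le> (\<Sum>\<sigma>\<in>?P. Tf mu G (\<lambda>z. \<nu> (perm_act z \<sigma>)) x y) / n" for x y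
  proof -
    let ?m = "mu_bar mu"
    have g: "Gamma_inf mu G x y \<ge> 0" using Gamma_nonneg[OF mp gn] .
    have sa: "(\<Sum>s\<in>?P. sqrt (\<nu> (perm_act x s) / ?m x) * sqrt (\<nu> (perm_act y s) / ?m y) * ?m x) / n
      \<le> sqrt (avg x / ?m x) * sqrt (avg y / ?m y) * ?m x"
      unfolding avg_def
      by (rule sqrt_avg[OF perms_fin npos nn nn mu_bar_pos[OF mp] mu_bar_pos[OF mp]])
    have "avg x - sqrt (avg x / ?m x) * sqrt (avg y / ?m y) * ?m x
      \<le> (\<Sum>s\<in>?P. \<nu> (perm_act x s)) / n - (\<Sum>s\<in>?P. sqrt (\<nu> (perm_act x s) / ?m x) * sqrt (\<nu> (perm_act y s) / ?m y) * ?m x) / n"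
      using sa unfolding avg_def by simp
    also have "\<dots> = (\<Sum>s\<in>?P. \<nu> (perm_act x s) - sqrt (\<nu> (perm_act x s) / ?m x) * sqrt (\<nu> (perm_act y s) / ?m y) * ?m x) / n"
      by (simp add: sum_subtractf diff_divide_distrib)
    finally have "Gamma_inf mu G x y * (avg x - sqrt (avg x / ?m x) * sqrt (avg y / ?m y) * ?m x)
      \<le> Gamma_inf mu G x y * ((\<Sum>s\<in>?P. \<nu> (perm_act x s) - sqrt (\<nu> (perm_act x s) / ?m x) * sqrt (\<nu> (perm_act y s) / ?m y) * ?m x) / n)"
      by (rule mult_left_mono[OF _ g])
    then show ?thesis unfolding Tf_def by (simp add: sum_distrib_left sum_divide_distrib)
  qed
  have "Jfun mu G avg = (\<Sum>x\<in>UNIV. \<Sum>y\<in>UNIV. Tf mu G avg x y)" by (rule J_eq[OF mp])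
  also have "\<dots> \<le> (\<Sum>x\<in>UNIV. \<Sum>y\<in>UNIV. (\<Sum>\<sigma>\<in>?P. Tf mu G (\<lambda>z. \<nu> (perm_act z \<sigma>)) x y) / n)"
    by (intro sum_mono pw)
  also have "\<dots> = (\<Sum>\<sigma>\<in>?P. \<Sum>x\<in>UNIV. \<Sum>y\<in>UNIV. Tf mu G (\<lambda>z. \<nu> (perm_act z \<sigma>)) x y) / n"
    by (simp add: sum_divide_distrib[symmetric] sum.swap[of _ ?P])
  also have "\<dots> = (\<Sum>\<sigma>\<in>?P. Jfun mu G \<nu>) / n"
  proof -
    have "\<And>\<sigma>. \<sigma> \<in> ?P \<Longrightarrow> (\<Sum>x\<in>UNIV. \<Sum>y\<in>UNIV. Tf mu G (\<lambda>z. \<nu> (perm_act z \<sigma>)) x y) = Jfun mu G \<nu>"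
      by (simp add: Tf_perm double_sum_perm[of _ "Tf mu G \<nu>"] J_eq[OF mp])
    then show ?thesis by simp
  qed
  also have "\<dots> = Jfun mu G \<nu>" using npos id_perms unfolding n_def by auto
  finally show ?thesis unfolding avg_def n_def .
qed


theorem proposition3p2:
  fixes G :: "'k::finite \<Rightarrow> 'a::finite \<Rightarrow> 'a \<Rightarrow> real"
    and mu :: "'k \<Rightarrow> 'a \<Rightarrow> real"
    and \<gamma> :: "('k \<Rightarrow> 'a) \<Rightarrow> real"
  assumes K2: "card (UNIV :: 'k set) \<ge> 2"
    and intens: "\<And>k. intensity_matrix (G k)"
    and irred: "\<And>k. irreducible_im (G k)"
    and inv: "\<And>k. invariant_dist (G k) (mu k)"
    and uniq: "\<And>k m. invariant_dist (G k) m \<Longrightarrow> m = mu k"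
    and rev: "\<And>k. reversible (G k) (mu k)"
    and pos: "\<And>k s. mu k s > 0"
    and gprob: "is_prob \<gamma>"
    and nonempty: "Mset mu \<gamma> \<noteq> {}"
  shows "nu_sym mu \<gamma> \<in> Mset mu \<gamma> \<and> (\<forall>\<nu>\<in>Mset mu \<gamma>. Jfun mu G (nu_sym mu \<gamma>) \<le> Jfun mu G \<nu>)"
proof -
  let ?P = "perms::('k\<Rightarrow>'k) set"
  define n where "n = real (card ?P)"
  have nfact: "real (fact (card (UNIV :: 'k set))) = n" unfolding n_def by (simp add: perms_card)
  have npos: "n > 0" unfolding n_def using perms_fin id_perms card_gt_0_iff by fastforce
  have gn: "\<And>k a b. a \<noteq> b \<Longrightarrow> G k a b \<ge> 0" using intens unfolding intensity_matrix_def by blast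
  define avg :: "(('k \<Rightarrow> 'a) \<Rightarrow> real) \<Rightarrow> ('k \<Rightarrow> 'a) \<Rightarrow> real"
    where "avg = (\<lambda>\<nu> x. (\<Sum>\<sigma>\<in>?P. \<nu> (perm_act x \<sigma>)) / n)"
  have sym_eq: "nu_sym mu \<gamma> = avg \<nu>" if "\<nu> \<in> Mset mu \<gamma>" for \<nu>
  proof
    fix x
    have g: "\<gamma> x = rho mu x * (\<Sum>\<sigma>\<in>?P. \<nu> (perm_act x \<sigma>))"
      using that unfolding Mset_def Mmap_def by auto
    show "nu_sym mu \<gamma> x = avg \<nu> x"
    proof -
      have "rho mu x > 0" by (rule rho_pos[OF pos])
      then show ?thesis unfolding nu_sym_def avg_def nfact g by simp
    qed
  qed
  from nonempty obtain \<nu>0 where n0: "\<nu>0 \<in> Mset mu \<gamma>" by blast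
  have p0: "is_prob \<nu>0" and g0: "\<gamma> = Mmap mu \<nu>0" using n0 unfolding Mset_def by auto
  have avg_sym: "avg \<nu>0 (perm_act x \<tau>) = avg \<nu>0 x" if "\<tau> \<in> ?P" for x \<tau>
    unfolding avg_def using Z_sym[OF that, of \<nu>0 x] by simp
  have "is_prob (avg \<nu>0)"
    unfolding is_prob_def
  proof
    show "\<forall>x. 0 \<le> avg \<nu>0 x" using p0 npos unfolding avg_def is_prob_def
      by (auto intro!: divide_nonneg_pos sum_nonneg)
    have "(\<Sum>x\<in>UNIV. avg \<nu>0 x) = (\<Sum>\<sigma>\<in>?P. \<Sum>x\<in>UNIV. \<nu>0 (perm_act x \<sigma>)) / n"
      unfolding avg_def by (simp add: sum_divide_distrib[symmetric] sum.swap[of _ ?P])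
    also have "\<dots> = (\<Sum>\<sigma>\<in>?P. 1) / n"
      using p0 unfolding is_prob_def by (simp add: sum_perm_act)
    also have "\<dots> = 1" using npos id_perms unfolding n_def by auto
    finally show "(\<Sum>x\<in>UNIV. avg \<nu>0 x) = 1" .
  qed
  moreover have "\<gamma> = Mmap mu (avg \<nu>0)"
  proof
    fix x
    have "Mmap mu (avg \<nu>0) x = rho mu x * (\<Sum>\<sigma>\<in>?P. avg \<nu>0 x)"
      unfolding Mmap_def using avg_sym by simp
    also have "\<dots> = rho mu x * (n * avg \<nu>0 x)" unfolding n_def by simp
    also have "\<dots> = \<gamma> x" unfolding avg_def g0 Mmap_def using npos by simp
    finally show "\<gamma> x = Mmap mu (avg \<nu>0) x" by simp
  qed
  ultimately have mem: "nu_sym mu \<gamma> \<in> Mset mu \<gamma>"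
    unfolding sym_eq[OF n0] Mset_def by simp
  have "Jfun mu G (nu_sym mu \<gamma>) \<le> Jfun mu G \<nu>" if "\<nu> \<in> Mset mu \<gamma>" for \<nu>
  proof -
    have "\<And>x. \<nu> x \<ge> 0" using that unfolding Mset_def is_prob_def by auto
    then show ?thesis
      unfolding sym_eq[OF that] avg_def n_def using avg_J[OF pos gn, where \<nu>=\<nu>] by simp
  qed
  with mem show ?thesis by blast
qed

end
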